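(* For every integer $d\ge 2$ and every $\theta>0$, in the stag hunt game described in the context, $F$ is strictly decreasing in $\sigma_c^2$, strictly decreasing in $\sigma_b^2$, and strictly increasing in $\sigma_{bc}$ (each time with the remaining parameters $\mu_b,\mu_c$ and the other second moments held fixed).
   Context: For integers $0\le k\le n$ and $\theta>0$ let $\psi_n^k=\frac{\prod_{i=1}^{k}(\theta+i-1)\prod_{j=1}^{n-k}(\theta+j-1)}{\prod_{l=1}^{n}(2\theta+l-1)}$ (empty products equal $1$). For real arrays $\mu_{C,k},\mu_{D,k},\sigma_{CC,kl},\sigma_{CD,kl},\sigma_{DD,kl}$ ($k,l=0,\ldots,d-1$) define $$F=\sum_{k=0}^{d-1}\binom{d-1}{k}\psi_{d+1}^{k+1}(\mu_{C,k}-\mu_{D,k})+\sum_{k,l=0}^{d-1}\binom{d-1}{k}\binom{d-1}{l}\Big[-\psi_{2d+1}^{k+l+2}(\sigma_{CC,kl}-\sigma_{CD,kl})+\psi_{2d+1}^{k+l+1}(\sigma_{DD,kl}-\sigma_{CD,kl})\Big].$$ These arrays are the scaled means and second moments of the payoffs $a_k$ (to a cooperator) and $b_k$ (to a defector) with $k$ cooperating partners in a group of size $d$. In the paper's large-population weak-selection approximation, the average abundance of $C$ is $\tfrac12+\tfrac{\delta(1-u)}{u}F$; weak selection favors the abundance of $C$ iff $F>0$, and increasing $F$ means increasing the average abundance of $C$. Stag hunt game: random benefit $b$ and cost $c$ have scaled moments $\mu_b,\mu_c,\sigma_b^2,\sigma_c^2,\sigma_{bc}$ (i.e. $E[b]=\mu_b\delta+o(\delta)$,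 $E[c]=\mu_c\delta+o(\delta)$, $E[b^2]=\sigma_b^2\delta+o(\delta)$, $E[c^2]=\sigma_c^2\delta+o(\delta)$, $E[bc]=\sigma_{bc}\delta+o(\delta)$). The payoffs are $a_k=-c$ for $k<d-1$, $a_{d-1}=b-c$, and $b_k=0$ for all $k$. Hence $\mu_{C,k}=-\mu_c$ for $k<d-1$, $\mu_{C,d-1}=\mu_b-\mu_c$, $\mu_{D,k}=0$, and $\sigma_{CD,kl}=\sigma_{DD,kl}=0$. Furthermore $\sigma_{CC,kl}=\sigma_c^2$ if $k,l<d-1$; $\sigma_{CC,kl}=\sigma_c^2-\sigma_{bc}$ if exactly one of $k,l$ equals $d-1$; and $\sigma_{CC,kl}=\sigma_c^2-2\sigma_{bc}+\sigma_b^2$ if $k=l=d-1$. *)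

theory Defs
  imports Complex_Main
begin

definition psi :: "real \<Rightarrow> nat \<Rightarrow> nat \<Rightarrow> real" where
  "psi \<theta> n k =
     (\<Prod>i=1..k. \<theta> + real i - 1) * (\<Prod>j=1..n-k. \<theta> + real j - 1)
     / (\<Prod>l=1..n. 2 * \<theta> + real l - 1)"

definition F_gen :: "nat \<Rightarrow> real \<Rightarrow> (nat \<Rightarrow> real) \<Rightarrow> (nat \<Rightarrow> real)
    \<Rightarrow> (nat \<Rightarrow> nat \<Rightarrow> real) \<Rightarrow> (nat \<Rightarrow> nat \<Rightarrow> real) \<Rightarrow> (nat \<Rightarrow> nat \<Rightarrow> real) \<Rightarrow> real" where
  "F_gen d \<theta> muC muD sCC sCD sDD =
     (\<Sum>k=0..d-1. real (d-1 choose k) * psi \<theta> (d+1) (k+1) * (muC k - muD k))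
   + (\<Sum>k=0..d-1. \<Sum>l=0..d-1. real (d-1 choose k) * real (d-1 choose l) *
        (- psi \<theta> (2*d+1) (k+l+2) * (sCC k l - sCD k l)
         + psi \<theta> (2*d+1) (k+l+1) * (sDD k l - sCD k l)))"

definition sh_muC :: "nat \<Rightarrow> real \<Rightarrow> real \<Rightarrow> nat \<Rightarrow> real" where
  "sh_muC d mu_b mu_c k = (if k = d-1 then mu_b - mu_c else - mu_c)"

definition sh_sCC :: "nat \<Rightarrow> real \<Rightarrow> real \<Rightarrow> real \<Rightarrow> nat \<Rightarrow> nat \<Rightarrow> real" where
  "sh_sCC d sb2 sc2 sbc k l =
     (if k = d-1 \<and> l = d-1 then sc2 - 2*sbc + sb2
      else if k = d-1 \<or> l = d-1 then sc2 - sbc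
      else sc2)"

definition F_stag :: "nat \<Rightarrow> real \<Rightarrow> real \<Rightarrow> real \<Rightarrow> real \<Rightarrow> real \<Rightarrow> real \<Rightarrow> real" where
  "F_stag d \<theta> mu_b mu_c sb2 sc2 sbc =
     F_gen d \<theta> (sh_muC d mu_b mu_c) (\<lambda>_. 0) (sh_sCC d sb2 sc2 sbc) (\<lambda>_ _. 0) (\<lambda>_ _. 0)"

end

theory Submission
  imports Defs
begin

lemma psi_pos: "\<theta> > 0 \<Longrightarrow> psi \<theta> n k > 0"
  unfolding psi_def
  by (intro divide_pos_pos mult_pos_pos prod_pos; auto; linarith)

lemma F_diff:
  "F_stag d \<theta> mb mc b1 c1 e1 - F_stag d \<theta> mb mc b2 c2 e2 =
   (\<Sum>k=0..d-1. \<Sum>l=0..d-1. real (d-1 choose k) * real (d-1 choose l) *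
        psi \<theta> (2*d+1) (k+l+2) * (sh_sCC d b2 c2 e2 k l - sh_sCC d b1 c1 e1 k l))"
  unfolding F_stag_def F_gen_def
  by (simp add: sum_subtractf[symmetric] algebra_simps)

lemma F_diff_pos:
  assumes th: "\<theta> > 0"
    and nn: "\<And>k l. sh_sCC d b2 c2 e2 k l - sh_sCC d b1 c1 e1 k l \<ge> 0"
    and p: "sh_sCC d b2 c2 e2 (d-1) (d-1) - sh_sCC d b1 c1 e1 (d-1) (d-1) > 0"
  shows "F_stag d \<theta> mb mc b2 c2 e2 < F_stag d \<theta> mb mc b1 c1 e1"
proof -
  have "0 < (\<Sum>k=0..d-1. \<Sum>l=0..d-1. real (d-1 choose k) * real (d-1 choose l) *
        psi \<theta> (2*d+1) (k+l+2) * (sh_sCC d b2 c2 e2 k l - sh_sCC d b1 c1 e1 k l))"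
  proof (rule sum_pos2[where i="d-1"])
    show "0 < (\<Sum>l=0..d-1. real (d-1 choose (d-1)) * real (d-1 choose l) *
        psi \<theta> (2*d+1) (d-1+l+2) * (sh_sCC d b2 c2 e2 (d-1) l - sh_sCC d b1 c1 e1 (d-1) l))"
    proof (rule sum_pos2[where i="d-1"])
      show "0 < real (d-1 choose (d-1)) * real (d-1 choose (d-1)) *
        psi \<theta> (2*d+1) (d-1+(d-1)+2) * (sh_sCC d b2 c2 e2 (d-1) (d-1) - sh_sCC d b1 c1 e1 (d-1) (d-1))"
        using p psi_pos[OF th] by (simp add: mult_pos_pos)
      show "\<And>l. l\<in>{0..d-1} \<Longrightarrow> 0 \<le> real (d-1 choose (d-1)) * real (d-1 choose l) *
        psi \<theta> (2*d+1) (d-1+l+2) * (sh_sCC d b2 c2 e2 (d-1) l - sh_sCC d b1 c1 e1 (d-1) l)"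
        apply (intro mult_nonneg_nonneg)
        using nn by (simp_all add: less_imp_le[OF psi_pos[OF th]])
    qed auto
    show "\<And>i. i\<in>{0..d-1} \<Longrightarrow> 0 \<le> (\<Sum>l=0..d-1. real (d-1 choose i) * real (d-1 choose l) *
        psi \<theta> (2*d+1) (i+l+2) * (sh_sCC d b2 c2 e2 i l - sh_sCC d b1 c1 e1 i l))"
      apply (intro sum_nonneg mult_nonneg_nonneg)
      using nn by (simp_all add: less_imp_le[OF psi_pos[OF th]])
  qed auto
  then show ?thesis using F_diff[of d \<theta> mb mc b1 c1 e1 b2 c2 e2] by linarith
qed

theorem mainTheorem4:
  fixes d :: nat and \<theta> :: real
  assumes "d \<ge> 2" and "\<theta> > 0"
  shows "(\<forall>mu_b mu_c sb2 sbc x y. x < y \<longrightarrow>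
            F_stag d \<theta> mu_b mu_c sb2 y sbc < F_stag d \<theta> mu_b mu_c sb2 x sbc)
       \<and> (\<forall>mu_b mu_c sc2 sbc x y. x < y \<longrightarrow>
            F_stag d \<theta> mu_b mu_c y sc2 sbc < F_stag d \<theta> mu_b mu_c x sc2 sbc)
       \<and> (\<forall>mu_b mu_c sb2 sc2 x y. x < y \<longrightarrow>
            F_stag d \<theta> mu_b mu_c sb2 sc2 x < F_stag d \<theta> mu_b mu_c sb2 sc2 y)"
  using assms(2)
  by (auto intro!: F_diff_pos simp: sh_sCC_def)

end
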